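(* Let $\rho:\mathbb{Z}\to[0,\infty)$ be a weight with finite moments, $f,g$ polynomials with $\deg f\le2$, $\deg g\le1$, $f(x+1)\rho(x+1)-f(x)\rho(x)=g(x)\rho(x)$ on $\mathbb{Z}$, and $\rho f$ vanishing at the end points of the support of $\rho$. Let $\{p_n\}$ be the monic orthogonal polynomials for $\rho$ with $\sum_xp_mp_n\rho=h_n\delta_{nm}$, $h_n>0$; let $\mathcal{A}_{\rm l}=g(x)T+f(x)(\Delta+\nabla)$, $c_n:=-\sum_xp_{n+1}(x)(\mathcal{A}_{\rm l}p_n)(x)\rho(x)$, $\omega(x)=f(x+1)\rho(x+1)$, and assume the Pfaffians $\mathrm{Pf}[\sum_x(x^i(x+1)^j-(x+1)^ix^j)\omega(x)]_{i,j=0}^{2n-1}$ are nonzero for all $n\ge1$. Let $Q_{2n+1}=p_{2n+1}$, $Q_{2n}=\sum_{l=0}^n\big(\prod_{j=l}^{n-1}c_{2j+1}/c_{2j}\big)p_{2l}$ and $u_n=c_{2n}$, and set $t_{2m,2m-2}:=-c_{2m-1}/c_{2m-2}$. Then for all $m\ge0$ (with $Q_{-2}=0$ in (3)): (1) $p_{2m+1}(x)=Q_{2m+1}(x)$; (2) $\frac{1}{u_m}\mathcal{A}_{\rm l}Q_{2m+1}(y)=\frac{p_{2m}(y)}{h_{2m}}+t_{2m+2,2m}\frac{p_{2m+2}(y)}{h_{2m+2}}$; (3) $p_{2m}(x)=Q_{2m}(x)+t_{2m,2m-2}Q_{2m-2}(x)$; (4) $\frac{1}{u_m}\mathcal{A}_{\rm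 l}Q_{2m}(y)=-\frac{p_{2m+1}(y)}{h_{2m+1}}$.
   Context: $T\phi(x)=\phi(x+1)$, $\Delta\phi(x)=\phi(x+1)-\phi(x)$, $\nabla\phi(x)=\phi(x)-\phi(x-1)$. The $Q_k$ are skew orthogonal for $\langle\phi,\psi\rangle_{s,\omega}=\sum_{x\in\mathbb{Z}}[\phi(x)\psi(x+1)-\phi(x+1)\psi(x)]\omega(x)$ with $\langle Q_{2n},Q_{2m+1}\rangle_{s,\omega}=u_n\delta_{nm}$. *)

theory Defs
  imports "HOL-Analysis.Analysis" "HOL-Computational_Algebra.Polynomial"
begin

definition Al :: "real poly \<Rightarrow> real poly \<Rightarrow> (real \<Rightarrow> real) \<Rightarrow> real \<Rightarrow> real" where
  "Al f g \<phi> x = poly g x * \<phi> (x + 1) + poly f x * ((\<phi> (x + 1) - \<phi> x) + (\<phi> x - \<phi> (x - 1)))"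

definition pfaffian :: "nat \<Rightarrow> (nat \<Rightarrow> nat \<Rightarrow> real) \<Rightarrow> real" where
  "pfaffian n A = (\<Sum>\<sigma> | \<sigma> permutes {..<2*n}.
      of_int (sign \<sigma>) * (\<Prod>i<n. A (\<sigma> (2*i)) (\<sigma> (2*i+1)))) / (2 ^ n * fact n)"

end

theory Submission
  imports Defs
begin


definition Lw :: "(int \<Rightarrow> real) \<Rightarrow> real poly \<Rightarrow> real" where
  "Lw \<rho> r = (\<Sum>\<^sub>\<infinity>x\<in>(UNIV::int set). poly r (of_int x) * \<rho> x)"

definition sh :: "real \<Rightarrow> real poly \<Rightarrow> real poly" where
  "sh a q = pcompose q [:a, 1:]"

definition Ap :: "real poly \<Rightarrow> real poly \<Rightarrow> real poly \<Rightarrow> real poly" where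
  "Ap f g q = g * sh 1 q + f * (sh 1 q - sh (-1) q)"

lemma poly_sh [simp]: "poly (sh a q) x = poly q (a + x)"
  by (simp add: sh_def poly_pcompose)

lemma Al_Ap: "Al f g (poly q) x = poly (Ap f g q) x"
proof -
  have "x - 1 = -1 + x" by simp
  then show ?thesis by (simp add: Al_def Ap_def algebra_simps)
qed

lemma Ap_add: "Ap f g (a + b) = Ap f g a + Ap f g b"
  by (simp add: Ap_def sh_def pcompose_add algebra_simps)

lemma Ap_smult: "Ap f g (smult c a) = smult c (Ap f g a)"
  by (simp add: Ap_def sh_def pcompose_smult algebra_simps smult_add_right smult_diff_right)

lemma Ap_0 [simp]: "Ap f g 0 = 0"
  by (simp add: Ap_def sh_def)

lemma degree_sh: "degree (sh a q) = degree q"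
  by (simp add: sh_def degree_pcompose)

lemma coeff_sh_top: "coeff (sh a q) (degree q) = lead_coeff q"
proof (cases "degree q = 0")
  case True
  then have "q = [:coeff q 0:]" using degree_0_id by metis
  then have "sh a q = q" by (metis pcompose_const sh_def)
  then show ?thesis by simp
next
  case False
  then have "lead_coeff (sh a q) = lead_coeff q"
    unfolding sh_def by (subst lead_coeff_comp) auto
  then show ?thesis using degree_sh by metis
qed

lemma degree_shdiff: "sh 1 q - sh (-1) q = 0 \<or> degree (sh 1 q - sh (-1) q) < degree q"
proof (rule ccontr)
  let ?d = "sh 1 q - sh (-1) q"
  assume a: "\<not> (?d = 0 \<or> degree ?d < degree q)"
  have le: "degree ?d \<le> degree q"
    using degree_diff_le[of "sh 1 q" "degree q" "sh (-1) q"] by (simp add: degree_sh)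
  with a have "degree ?d = degree q" by simp
  moreover have "coeff ?d (degree q) = 0" by (simp add: coeff_sh_top)
  ultimately have "?d = 0" by (metis leading_coeff_0_iff)
  with a show False by simp
qed

lemma degree_Ap:
  assumes "degree f \<le> 2" "degree g \<le> 1"
  shows "degree (Ap f g q) \<le> degree q + 1"
proof -
  have 1: "degree (g * sh 1 q) \<le> degree q + 1"
    using degree_mult_le[of g "sh 1 q"] assms by (simp add: degree_sh)
  have 2: "degree (f * (sh 1 q - sh (-1) q)) \<le> degree q + 1"
  proof (cases "sh 1 q - sh (-1) q = 0")
    case True then show ?thesis by simp
  next
    case False
    then have "degree (sh 1 q - sh (-1) q) < degree q" using degree_shdiff by blast
    then show ?thesis using degree_mult_le[of f "sh 1 q - sh (-1) q"] assms by linarith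
  qed
  show ?thesis unfolding Ap_def using 1 2 by (rule degree_add_le)
qed

definition lin :: "(real poly \<Rightarrow> real) \<Rightarrow> bool" where
  "lin l \<longleftrightarrow> (\<forall>x y. l (x + y) = l x + l y) \<and> (\<forall>c x. l (smult c x) = c * l x)"

lemma lin_sum:
  assumes "lin l" "finite K"
  shows "l (\<Sum>k\<in>K. smult (\<gamma> k) (\<psi> k)) = (\<Sum>k\<in>K. \<gamma> k * l (\<psi> k))"
  using assms(2)
proof (induction K rule: finite_induct)
  case empty
  have "l (smult 0 0) = 0 * l 0" using assms(1) unfolding lin_def by blast
  then show ?case by simp
next
  case (insert x F)
  then show ?case using assms(1) unfolding lin_def by simp
qed

lemma lin_cmult: "lin l \<Longrightarrow> lin (\<lambda>x. l x * K)"
  unfolding lin_def by (simp add: algebra_simps)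

definition PF :: "('a \<Rightarrow> 'a \<Rightarrow> real) \<Rightarrow> nat \<Rightarrow> (nat \<Rightarrow> 'a) \<Rightarrow> real" where
  "PF B n \<phi> = (\<Sum>\<sigma> | \<sigma> permutes {..<2*n}.
      of_int (sign \<sigma>) * (\<Prod>i<n. B (\<phi> (\<sigma> (2*i))) (\<phi> (\<sigma> (2*i+1)))))"

lemma PF_swap:
  assumes "a < 2*n" "b < 2*n" "a \<noteq> b"
  shows "PF B n (\<phi> \<circ> Transposition.transpose a b) = - PF B n \<phi>"
proof -
  let ?t = "Transposition.transpose a b"
  have tp: "?t permutes {..<2*n}" using assms by (simp add: permutes_swap_id)
  have "PF B n (\<phi> \<circ> ?t) = (\<Sum>\<sigma> | \<sigma> permutes {..<2*n}. of_int (sign (?t \<circ> \<sigma>)) *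
      (\<Prod>i<n. B ((\<phi> \<circ> ?t) ((?t \<circ> \<sigma>) (2*i))) ((\<phi> \<circ> ?t) ((?t \<circ> \<sigma>) (2*i+1)))))"
    unfolding PF_def by (rule setum_permutations_compose_left[OF tp])
  also have "\<dots> = (\<Sum>\<sigma> | \<sigma> permutes {..<2*n}.
      - (of_int (sign \<sigma>) * (\<Prod>i<n. B (\<phi> (\<sigma> (2*i))) (\<phi> (\<sigma> (2*i+1))))))"
  proof (rule sum.cong[OF refl])
    fix \<sigma> assume "\<sigma> \<in> {\<sigma>. \<sigma> permutes {..<2*n}}"
    then have "permutation \<sigma>" by (auto simp: permutation_permutes)
    then have "sign (?t \<circ> \<sigma>) = - sign \<sigma>"
      using assms by (simp add: sign_compose permutation_swap_id sign_swap_id)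
    then show "of_int (sign (?t \<circ> \<sigma>)) *
      (\<Prod>i<n. B ((\<phi> \<circ> ?t) ((?t \<circ> \<sigma>) (2*i))) ((\<phi> \<circ> ?t) ((?t \<circ> \<sigma>) (2*i+1)))) =
      - (of_int (sign \<sigma>) * (\<Prod>i<n. B (\<phi> (\<sigma> (2*i))) (\<phi> (\<sigma> (2*i+1)))))"
      by simp
  qed
  also have "\<dots> = - PF B n \<phi>" by (simp add: PF_def sum_negf)
  finally show ?thesis .
qed

lemma PF_dup:
  assumes "a < 2*n" "b < 2*n" "a \<noteq> b" "\<phi> a = \<phi> b"
  shows "PF B n \<phi> = 0"
proof -
  have "\<phi> \<circ> Transposition.transpose a b = \<phi>"
    using assms(4) by (auto simp: fun_eq_iff Transposition.transpose_def)
  then have "PF B n \<phi> = - PF B n \<phi>" using PF_swap[OF assms(1-3), of B \<phi>] by simp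
  then show ?thesis by simp
qed

lemma lin_prod:
  assumes bil1: "\<And>x. lin (\<lambda>y. B x y)" and bil2: "\<And>y. lin (\<lambda>x. B x y)"
    and \<sigma>: "\<sigma> permutes {..<2*(n::nat)}" and a: "a < 2*n"
  shows "lin (\<lambda>z. \<Prod>i<n. B ((\<phi>(a:=z)) (\<sigma> (2*i))) ((\<phi>(a:=z)) (\<sigma> (2*i+1))))"
proof -
  obtain j where j: "\<sigma> j = a" using \<sigma> unfolding permutes_def by metis
  have jlt: "j < 2*n" using j a permutes_in_image[OF \<sigma>, of j] by simp
  define i0 where "i0 = j div 2"
  have i0: "i0 < n" using jlt unfolding i0_def by simp
  have jc: "j = 2*i0 \<or> j = 2*i0+1" unfolding i0_def by presburger
  have inj: "inj \<sigma>" using permutes_inj[OF \<sigma>] .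
  have other: "\<sigma> (2*i) \<noteq> a \<and> \<sigma> (2*i+1) \<noteq> a" if "i \<in> {..<n} - {i0}" for i
  proof -
    have "2*i \<noteq> j" "2*i+1 \<noteq> j" using that jc by auto
    then show ?thesis using j inj by (metis injD)
  qed
  define K where "K = (\<Prod>i\<in>{..<n}-{i0}. B (\<phi> (\<sigma> (2*i))) (\<phi> (\<sigma> (2*i+1))))"
  have eq: "(\<Prod>i<n. B ((\<phi>(a:=z)) (\<sigma> (2*i))) ((\<phi>(a:=z)) (\<sigma> (2*i+1)))) =
      B ((\<phi>(a:=z)) (\<sigma> (2*i0))) ((\<phi>(a:=z)) (\<sigma> (2*i0+1))) * K" for z
  proof -
    have "(\<Prod>i<n. B ((\<phi>(a:=z)) (\<sigma> (2*i))) ((\<phi>(a:=z)) (\<sigma> (2*i+1)))) =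
      B ((\<phi>(a:=z)) (\<sigma> (2*i0))) ((\<phi>(a:=z)) (\<sigma> (2*i0+1))) *
      (\<Prod>i\<in>{..<n}-{i0}. B ((\<phi>(a:=z)) (\<sigma> (2*i))) ((\<phi>(a:=z)) (\<sigma> (2*i+1))))"
      using i0 by (subst prod.remove[of _ i0]) auto
    also have "(\<Prod>i\<in>{..<n}-{i0}. B ((\<phi>(a:=z)) (\<sigma> (2*i))) ((\<phi>(a:=z)) (\<sigma> (2*i+1)))) = K"
      unfolding K_def by (rule prod.cong) (use other in auto)
    finally show ?thesis .
  qed
  show ?thesis
  proof (cases "j = 2*i0")
    case True
    then have "\<sigma> (2*i0+1) \<noteq> a" using j inj by (metis injD n_not_Suc_n add.commute plus_1_eq_Suc)
    then have "lin (\<lambda>z. B ((\<phi>(a:=z)) (\<sigma> (2*i0))) ((\<phi>(a:=z)) (\<sigma> (2*i0+1))) * K)"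
      using True j by (simp add: lin_cmult bil2)
    then show ?thesis using eq by simp
  next
    case False
    then have j1: "j = 2*i0+1" using jc by simp
    then have "\<sigma> (2*i0) \<noteq> a" using j inj by (metis injD n_not_Suc_n add.commute plus_1_eq_Suc)
    then have "lin (\<lambda>z. B ((\<phi>(a:=z)) (\<sigma> (2*i0))) ((\<phi>(a:=z)) (\<sigma> (2*i0+1))) * K)"
      using j1 j by (simp add: lin_cmult bil1)
    then show ?thesis using eq by simp
  qed
qed

lemma lin_PF:
  assumes bil1: "\<And>x. lin (\<lambda>y. B x y)" and bil2: "\<And>y. lin (\<lambda>x. B x y)"
    and a: "a < 2*(n::nat)"
  shows "lin (\<lambda>z. PF B n (\<phi>(a:=z)))"
proof -
  have L: "lin (\<lambda>z. \<Prod>i<n. B ((\<phi>(a:=z)) (\<sigma> (2*i))) ((\<phi>(a:=z)) (\<sigma> (2*i+1))))"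
    if "\<sigma> \<in> {\<sigma>. \<sigma> permutes {..<2*n}}" for \<sigma>
    using lin_prod[OF bil1 bil2 _ a] that by simp
  show ?thesis
    unfolding lin_def PF_def
  proof (intro conjI allI)
    fix x y
    show "(\<Sum>\<sigma> | \<sigma> permutes {..<2*n}. of_int (sign \<sigma>) *
        (\<Prod>i<n. B ((\<phi>(a:=x+y)) (\<sigma> (2*i))) ((\<phi>(a:=x+y)) (\<sigma> (2*i+1))))) =
      (\<Sum>\<sigma> | \<sigma> permutes {..<2*n}. of_int (sign \<sigma>) *
        (\<Prod>i<n. B ((\<phi>(a:=x)) (\<sigma> (2*i))) ((\<phi>(a:=x)) (\<sigma> (2*i+1))))) +
      (\<Sum>\<sigma> | \<sigma> permutes {..<2*n}. of_int (sign \<sigma>) *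
        (\<Prod>i<n. B ((\<phi>(a:=y)) (\<sigma> (2*i))) ((\<phi>(a:=y)) (\<sigma> (2*i+1)))))"
      unfolding sum.distrib[symmetric]
      by (rule sum.cong[OF refl]) (use L in \<open>simp add: lin_def distrib_left\<close>)
  next
    fix c x
    show "(\<Sum>\<sigma> | \<sigma> permutes {..<2*n}. of_int (sign \<sigma>) *
        (\<Prod>i<n. B ((\<phi>(a:=smult c x)) (\<sigma> (2*i))) ((\<phi>(a:=smult c x)) (\<sigma> (2*i+1))))) =
      c * (\<Sum>\<sigma> | \<sigma> permutes {..<2*n}. of_int (sign \<sigma>) *
        (\<Prod>i<n. B ((\<phi>(a:=x)) (\<sigma> (2*i))) ((\<phi>(a:=x)) (\<sigma> (2*i+1)))))"
      unfolding sum_distrib_left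
      by (rule sum.cong[OF refl]) (use L in \<open>simp add: lin_def\<close>)
  qed
qed



lemma summable_on_finsum:
  fixes F :: "'i \<Rightarrow> 'a \<Rightarrow> real"
  assumes "finite I" "\<And>i. i \<in> I \<Longrightarrow> F i summable_on A"
  shows "(\<lambda>x. \<Sum>i\<in>I. F i x) summable_on A"
  using assms
proof (induction I rule: finite_induct)
  case empty then show ?case by simp
next
  case (insert i I)
  then show ?case by (simp add: summable_on_add)
qed

lemma infsum_diff_real:
  fixes F G :: "'a \<Rightarrow> real"
  assumes "F summable_on A" "G summable_on A"
  shows "(\<Sum>\<^sub>\<infinity>x\<in>A. F x - G x) = infsum F A - infsum G A"
proof -
  have "(\<Sum>\<^sub>\<infinity>x\<in>A. F x - G x) = (\<Sum>\<^sub>\<infinity>x\<in>A. F x + (- G x))" by simp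
  also have "\<dots> = infsum F A + (\<Sum>\<^sub>\<infinity>x\<in>A. - G x)"
    by (rule infsum_add) (use assms summable_on_uminus in auto)
  also have "(\<Sum>\<^sub>\<infinity>x\<in>A. - G x) = - infsum G A" by (rule infsum_uminus)
  finally show ?thesis by simp
qed

lemma range_succ_int: "range (\<lambda>x::int. x + 1) = UNIV"
proof -
  have "y \<in> range (\<lambda>x::int. x + 1)" for y by (rule image_eqI[where x="y - 1"]) auto
  then show ?thesis by auto
qed

lemma smult_sum_right: "smult a (sum F S) = (\<Sum>x\<in>S. smult a (F x))"
  by (induction S rule: infinite_finite_induct) (simp_all add: smult_add_right)

locale OPS =
  fixes \<rho> :: "int \<Rightarrow> real" and f g :: "real poly" and p :: "nat \<Rightarrow> real poly" and h :: "nat \<Rightarrow> real"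
  assumes nonneg: "\<forall>x. \<rho> x \<ge> 0"
    and moments: "\<forall>k::nat. (\<lambda>x::int. \<bar>real_of_int x\<bar> ^ k * \<rho> x) summable_on UNIV"
    and deg_f: "degree f \<le> 2" and deg_g: "degree g \<le> 1"
    and pearson: "\<forall>x::int. poly f (of_int (x + 1)) * \<rho> (x + 1) - poly f (of_int x) * \<rho> x
                          = poly g (of_int x) * \<rho> x"
    and monic: "\<forall>n. degree (p n) = n \<and> lead_coeff (p n) = 1"
    and orth: "\<forall>m n. Lw \<rho> (p m * p n) = (if n = m then h n else 0)"
    and h_pos: "\<forall>n. h n > 0"
begin

lemma pdeg [simp]: "degree (p n) = n"
  using monic by auto

lemma ptop [simp]: "coeff (p n) n = 1"
proof -
  have "lead_coeff (p n) = 1" using monic by auto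
  then show ?thesis by simp
qed

lemma mono_summ: "(\<lambda>x::int. real_of_int x ^ k * \<rho> x) summable_on UNIV"
proof -
  have "(\<lambda>x::int. norm (real_of_int x ^ k * \<rho> x)) = (\<lambda>x::int. \<bar>real_of_int x\<bar> ^ k * \<rho> x)"
    using nonneg by (auto simp: abs_mult power_abs)
  then have "Infinite_Sum.abs_summable_on (\<lambda>x::int. real_of_int x ^ k * \<rho> x) UNIV"
    using moments by simp
  then show ?thesis by (rule abs_summable_summable)
qed

lemma summ: "(\<lambda>x::int. poly r (of_int x) * \<rho> x) summable_on UNIV"
proof -
  have "(\<lambda>x::int. poly r (of_int x) * \<rho> x) =
        (\<lambda>x. \<Sum>i\<le>degree r. coeff r i * (real_of_int x ^ i * \<rho> x))"
    by (auto simp: poly_altdef sum_distrib_right mult.assoc)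
  moreover have "(\<lambda>x. \<Sum>i\<le>degree r. coeff r i * (real_of_int x ^ i * \<rho> x)) summable_on UNIV"
    by (rule summable_on_finsum) (auto intro: summable_on_cmult_right mono_summ)
  ultimately show ?thesis by simp
qed

lemma L_add: "Lw \<rho> (a + b) = Lw \<rho> a + Lw \<rho> b"
  unfolding Lw_def by (simp add: distrib_right infsum_add summ)

lemma L_smult: "Lw \<rho> (smult c a) = c * Lw \<rho> a"
  unfolding Lw_def by (simp add: mult.assoc infsum_cmult_right')

lemma L_minus: "Lw \<rho> (- a) = - Lw \<rho> a"
  using L_smult[of "-1" a] by simp

lemma L_diff: "Lw \<rho> (a - b) = Lw \<rho> a - Lw \<rho> b"
  using L_add[of a "-b"] L_minus[of b] by simp

lemma lin_L: "lin (\<lambda>r. Lw \<rho> (q * r))"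
  unfolding lin_def by (simp add: distrib_left L_add L_smult)

definition B :: "real poly \<Rightarrow> real poly \<Rightarrow> real" where
  "B \<phi> \<psi> = Lw \<rho> (\<phi> * Ap f g \<psi>)"

lemma lin_B2: "lin (\<lambda>\<psi>. B \<phi> \<psi>)"
  unfolding lin_def B_def by (simp add: Ap_add Ap_smult distrib_left L_add L_smult)

lemma lin_B1: "lin (\<lambda>\<phi>. B \<phi> \<psi>)"
  unfolding lin_def B_def by (simp add: distrib_right L_add L_smult)

lemma B_formula: "B \<phi> \<psi> = Lw \<rho> (f * (sh (-1) \<phi> * \<psi> - \<phi> * sh (-1) \<psi>))"
proof -
  define G where "G y = poly (f * (sh (-1) \<phi> * \<psi>)) (of_int y) * \<rho> y" for y
  define H where "H y = poly (f * (\<phi> * sh (-1) \<psi>)) (of_int y) * \<rho> y" for y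
  have pt: "poly (\<phi> * Ap f g \<psi>) (of_int x) * \<rho> x = G (x+1) - H x" for x
  proof -
    have e: "poly g (of_int x) * \<rho> x = poly f (of_int x + 1) * \<rho> (x + 1) - poly f (of_int x) * \<rho> x"
      using pearson by simp
    have "poly (\<phi> * Ap f g \<psi>) (of_int x) * \<rho> x - (G (x+1) - H x)
       = poly \<phi> (of_int x) * poly \<psi> (of_int x + 1) *
          (poly g (of_int x) * \<rho> x - (poly f (of_int x + 1) * \<rho> (x + 1) - poly f (of_int x) * \<rho> x))"
      unfolding G_def H_def Ap_def by (simp add: algebra_simps)
    also have "\<dots> = 0" using e by simp
    finally show ?thesis by simp
  qed
  have sG: "G summable_on UNIV" unfolding G_def by (rule summ)
  have sH: "H summable_on UNIV" unfolding H_def by (rule summ)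
  have sG1: "(\<lambda>x. G (x+1)) summable_on UNIV"
    using sG summable_on_reindex[of "\<lambda>x::int. x+1" UNIV G] range_succ_int by (simp add: o_def)
  have iG: "(\<Sum>\<^sub>\<infinity>x\<in>UNIV. G (x+1)) = infsum G UNIV"
    using infsum_reindex[of "\<lambda>x::int. x+1" UNIV G] range_succ_int by (simp add: o_def)
  have "B \<phi> \<psi> = (\<Sum>\<^sub>\<infinity>x\<in>UNIV. G (x+1) - H x)" unfolding B_def Lw_def using pt by simp
  also have "\<dots> = infsum G UNIV - infsum H UNIV"
    using infsum_diff_real[OF sG1 sH] iG by simp
  also have "\<dots> = Lw \<rho> (f * (sh (-1) \<phi> * \<psi>)) - Lw \<rho> (f * (\<phi> * sh (-1) \<psi>))"
    unfolding G_def H_def Lw_def ..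
  also have "\<dots> = Lw \<rho> (f * (sh (-1) \<phi> * \<psi> - \<phi> * sh (-1) \<psi>))"
    by (simp add: L_diff right_diff_distrib)
  finally show ?thesis .
qed

lemma B_skew: "B \<phi> \<psi> = - B \<psi> \<phi>"
proof -
  have "f * (sh (-1) \<phi> * \<psi> - \<phi> * sh (-1) \<psi>) = - (f * (sh (-1) \<psi> * \<phi> - \<psi> * sh (-1) \<phi>))"
    by (simp add: algebra_simps)
  then show ?thesis by (simp add: B_formula L_minus)
qed

lemma B_self: "B \<phi> \<phi> = 0"
  using B_skew[of \<phi> \<phi>] by simp

lemma p0: "p 0 = 1"
proof -
  have "degree (p 0) = 0" "lead_coeff (p 0) = 1" using monic by auto
  then have "degree (p 0) = 0" "coeff (p 0) 0 = 1" by auto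
  then show ?thesis by (metis degree_0_id one_pCons)
qed

lemma span: "degree r \<le> N \<Longrightarrow> \<exists>a. r = (\<Sum>k\<le>N. smult (a k) (p k))"
proof (induction N arbitrary: r)
  case 0
  then have "r = [:coeff r 0:]" by (metis degree_0_id le_0_eq)
  then have "r = smult (coeff r 0) (p 0)" by (simp add: p0)
  then show ?case by auto
next
  case (Suc N)
  define r' where "r' = r - smult (coeff r (Suc N)) (p (Suc N))"
  have "degree r' \<le> N"
  proof (rule degree_le, intro allI impI)
    fix i assume i: "N < i"
    show "coeff r' i = 0"
    proof (cases "i = Suc N")
      case True then show ?thesis using monic unfolding r'_def by simp
    next
      case False
      then have "i > Suc N" using i by simp
      then have "coeff r i = 0" "coeff (p (Suc N)) i = 0"
        using Suc.prems monic by (auto intro: coeff_eq_0)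
      then show ?thesis unfolding r'_def by simp
    qed
  qed
  then obtain a where a: "r' = (\<Sum>k\<le>N. smult (a k) (p k))" using Suc.IH by blast
  define a' where "a' = a(Suc N := coeff r (Suc N))"
  have "(\<Sum>k\<le>Suc N. smult (a' k) (p k)) = (\<Sum>k\<le>N. smult (a k) (p k)) + smult (coeff r (Suc N)) (p (Suc N))"
    by (simp add: a'_def)
  also have "\<dots> = r" using a unfolding r'_def by simp
  finally show ?case by metis
qed

lemma orth_low: "degree r < n \<Longrightarrow> Lw \<rho> (p n * r) = 0"
proof -
  assume d: "degree r < n"
  then have "degree r \<le> n-1" by simp
  then obtain a where a: "r = (\<Sum>k\<le>n-1. smult (a k) (p k))" using span by blast
  have "Lw \<rho> (p n * r) = (\<Sum>k\<le>n-1. a k * Lw \<rho> (p n * p k))"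
    unfolding a by (rule lin_sum[OF lin_L]) simp
  also have "\<dots> = 0" using d orth by (intro sum.neutral) auto
  finally show ?thesis .
qed

lemma expand: "degree r \<le> N \<Longrightarrow> r = (\<Sum>k\<le>N. smult (Lw \<rho> (p k * r) / h k) (p k))"
proof -
  assume d: "degree r \<le> N"
  then obtain a where a: "r = (\<Sum>k\<le>N. smult (a k) (p k))" using span by blast
  have "Lw \<rho> (p j * r) / h j = a j" if j: "j \<le> N" for j
  proof -
    have "Lw \<rho> (p j * r) = (\<Sum>k\<le>N. a k * Lw \<rho> (p j * p k))"
      by (subst a, rule lin_sum[OF lin_L]) simp
    also have "\<dots> = (\<Sum>k\<le>N. if k = j then a k * h k else 0)"
      using orth by (intro sum.cong) auto
    also have "\<dots> = a j * h j" using j by simp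
    finally show ?thesis using h_pos by (simp add: less_imp_neq[symmetric])
  qed
  then have "(\<Sum>k\<le>N. smult (Lw \<rho> (p k * r) / h k) (p k)) = (\<Sum>k\<le>N. smult (a k) (p k))"
    by (intro sum.cong) auto
  then show ?thesis using a by simp
qed

lemma degree_Ap': "degree (Ap f g q) \<le> degree q + 1"
  using degree_Ap[OF deg_f deg_g] .

lemma B_low: "k + 1 < n \<Longrightarrow> B (p k) (p n) = 0"
proof -
  assume "k + 1 < n"
  then have "degree (Ap f g (p k)) < n" using degree_Ap'[of "p k"] monic by (simp add: le_less_trans)
  then have "B (p n) (p k) = 0" unfolding B_def by (rule orth_low)
  then show ?thesis using B_skew[of "p k" "p n"] by simp
qed

lemma Ap_p: "Ap f g (p n) = smult (B (p (Suc n)) (p n) / h (Suc n)) (p (Suc n)) +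
    (if n = 0 then 0 else smult (B (p (n-1)) (p n) / h (n-1)) (p (n-1)))"
proof -
  define F where "F k = smult (B (p k) (p n) / h k) (p k)" for k
  have "degree (Ap f g (p n)) \<le> Suc n" using degree_Ap'[of "p n"] monic by simp
  then have e: "Ap f g (p n) = (\<Sum>k\<le>Suc n. F k)"
    unfolding F_def B_def by (rule expand)
  have Fn: "F n = 0" unfolding F_def by (simp add: B_self)
  show ?thesis
  proof (cases n)
    case 0
    then show ?thesis using e Fn by (simp add: F_def)
  next
    case (Suc n')
    have "(\<Sum>k<n'. F k) = 0" unfolding F_def using Suc by (intro sum.neutral) (auto simp: B_low)
    then have "(\<Sum>k\<le>Suc n. F k) = F (Suc n) + F n'"
      using Fn Suc by (simp add: lessThan_Suc_atMost[symmetric])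
    then show ?thesis using e Suc by (simp add: F_def)
  qed
qed

lemma B_pN_zero:
  assumes z: "B (p (2*m+1)) (p (2*m)) = 0" and dq: "degree q \<le> 2*m"
  shows "B (p (2*m+1)) q = 0"
proof -
  define r where "r = q - smult (coeff q (2*m)) (p (2*m))"
  have qr: "q = smult (coeff q (2*m)) (p (2*m)) + r" unfolding r_def by simp
  have dr: "degree r \<le> 2*m"
    unfolding r_def using dq monic
    by (metis degree_diff_le degree_smult_le order.trans)
  have cr: "coeff r (2*m) = 0" unfolding r_def using monic by simp
  have "degree (Ap f g r) \<le> 2*m"
  proof (cases "r = 0")
    case True then show ?thesis by simp
  next
    case False
    then have "degree r \<noteq> 2*m" using cr by (metis leading_coeff_0_iff)
    then show ?thesis using dr degree_Ap'[of r] by simp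
  qed
  then have "B (p (2*m+1)) r = 0" unfolding B_def by (intro orth_low) simp
  then show ?thesis
    using lin_B2[of "p (2*m+1)"] z unfolding lin_def by (subst qr) simp
qed

lemma pf_zero:
  assumes z: "B (p (2*m+1)) (p (2*m)) = 0"
  shows "PF B (Suc m) (\<lambda>k. monom 1 k) = 0"
proof -
  define N where "N = 2*m+1"
  define \<phi> where "\<phi> = (\<lambda>k::nat. monom (1::real) k)"
  define l where "l z = PF B (Suc m) (\<phi>(N:=z))" for z
  have N: "N < 2 * Suc m" unfolding N_def by simp
  have ll: "lin l" unfolding l_def by (rule lin_PF[OF lin_B2 lin_B1 N])
  have l0: "PF B (Suc m) \<phi> = l (monom 1 N)" unfolding l_def \<phi>_def by simp
  define r where "r = monom 1 N - p N"
  have mr: "monom 1 N = p N + r" unfolding r_def by simp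
  have lp: "l (p N) = 0"
    unfolding l_def PF_def
  proof (rule sum.neutral, intro ballI)
    fix \<sigma> assume "\<sigma> \<in> {\<sigma>. \<sigma> permutes {..<2 * Suc m}}"
    then have \<sigma>: "\<sigma> permutes {..<2 * Suc m}" by simp
    obtain j where j: "\<sigma> j = N" using \<sigma> unfolding permutes_def by metis
    have jlt: "j < 2 * Suc m" using j N permutes_in_image[OF \<sigma>, of j] by simp
    define i0 where "i0 = j div 2"
    have i0: "i0 < Suc m" using jlt unfolding i0_def by simp
    have jc: "j = 2*i0 \<or> j = 2*i0+1" unfolding i0_def by presburger
    have inj: "inj \<sigma>" using permutes_inj[OF \<sigma>] .
    have lowq: "degree ((\<phi>(N := p N)) e) \<le> 2*m" if "e < 2 * Suc m" "e \<noteq> N" for e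
      using that unfolding \<phi>_def N_def by (simp add: degree_monom_eq)
    have "B ((\<phi>(N := p N)) (\<sigma> (2*i0))) ((\<phi>(N := p N)) (\<sigma> (2*i0+1))) = 0"
    proof (cases "j = 2*i0")
      case True
      have ne: "\<sigma> (2*i0+1) \<noteq> N" using True j inj by (metis injD n_not_Suc_n add.commute plus_1_eq_Suc)
      have lt: "\<sigma> (2*i0+1) < 2 * Suc m" using permutes_in_image[OF \<sigma>] i0 by simp
      show ?thesis using True j B_pN_zero[OF z lowq[OF lt ne]] by (simp add: N_def)
    next
      case False
      then have j1: "j = 2*i0+1" using jc by simp
      have ne: "\<sigma> (2*i0) \<noteq> N" using j1 j inj by (metis injD n_not_Suc_n add.commute plus_1_eq_Suc)
      have lt: "\<sigma> (2*i0) < 2 * Suc m" using permutes_in_image[OF \<sigma>] i0 by simp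
      have "B (p (2*m+1)) ((\<phi>(N := p N)) (\<sigma> (2*i0))) = 0"
        using B_pN_zero[OF z lowq[OF lt ne]] .
      then show ?thesis using j1 j B_skew[of "(\<phi>(N := p N)) (\<sigma> (2*i0))" "p N"] by (simp add: N_def)
    qed
    then have fz: "\<exists>i\<in>{..<Suc m}. B ((\<phi>(N := p N)) (\<sigma> (2*i))) ((\<phi>(N := p N)) (\<sigma> (2*i+1))) = 0"
      using i0 by blast
    have "(\<Prod>i<Suc m. B ((\<phi>(N := p N)) (\<sigma> (2*i))) ((\<phi>(N := p N)) (\<sigma> (2*i+1)))) = 0"
      by (rule prod_zero[OF _ fz]) simp
    then show "real_of_int (sign \<sigma>) * (\<Prod>i<Suc m. B ((\<phi>(N := p N)) (\<sigma> (2*i))) ((\<phi>(N := p N)) (\<sigma> (2*i+1)))) = 0"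
      by simp
  qed
  have dr: "degree r \<le> N" unfolding r_def
    by (rule degree_diff_le) (simp_all add: degree_monom_le)
  have crN: "coeff r N = 0" unfolding r_def using monic by simp
  have rs: "r = (\<Sum>k\<le>N. smult (coeff r k) (monom 1 k))"
    using poly_as_sum_of_monoms'[OF dr] by (simp add: smult_monom)
  have lr: "l r = 0"
  proof -
    have "l r = (\<Sum>k\<le>N. coeff r k * l (monom 1 k))"
      by (subst rs, rule lin_sum[OF ll]) simp
    also have "\<dots> = 0"
    proof (rule sum.neutral, intro ballI)
      fix k assume k: "k \<in> {..N}"
      show "coeff r k * l (monom 1 k) = 0"
      proof (cases "k = N")
        case True then show ?thesis using crN by simp
      next
        case False
        then have "l (monom 1 k) = 0" unfolding l_def
          using k N by (intro PF_dup[of k _ N]) (auto simp: \<phi>_def)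
        then show ?thesis by simp
      qed
    qed
    finally show ?thesis .
  qed
  show ?thesis using l0 mr ll lp lr unfolding lin_def \<phi>_def by simp
qed

end



theorem proposition3p11:
  fixes \<rho> :: "int \<Rightarrow> real" and f g :: "real poly"
    and p :: "nat \<Rightarrow> real poly" and h :: "nat \<Rightarrow> real"
    and c u t :: "nat \<Rightarrow> real" and Q :: "nat \<Rightarrow> real poly" and \<omega> :: "int \<Rightarrow> real"
  assumes nonneg: "\<forall>x. \<rho> x \<ge> 0"
    and moments: "\<forall>k::nat. (\<lambda>x::int. \<bar>real_of_int x\<bar> ^ k * \<rho> x) summable_on UNIV"
    and deg_f: "degree f \<le> 2" and deg_g: "degree g \<le> 1"
    and pearson: "\<forall>x::int. poly f (of_int (x + 1)) * \<rho> (x + 1) - poly f (of_int x) * \<rho> x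
                          = poly g (of_int x) * \<rho> x"
    and bdry_low: "\<forall>a::int. \<rho> a > 0 \<and> (\<forall>x. \<rho> x > 0 \<longrightarrow> a \<le> x)
                      \<longrightarrow> poly f (of_int a) * \<rho> a = 0"
    and bdry_top: "((\<lambda>x::int. poly f (of_int x) * \<rho> x) \<longlongrightarrow> 0) at_top"
    and bdry_bot: "((\<lambda>x::int. poly f (of_int x) * \<rho> x) \<longlongrightarrow> 0) at_bot"
    and monic: "\<forall>n. degree (p n) = n \<and> lead_coeff (p n) = 1"
    and orth: "\<forall>m n. (\<Sum>\<^sub>\<infinity>x\<in>(UNIV::int set). poly (p m) (of_int x) * poly (p n) (of_int x) * \<rho> x)
                    = (if n = m then h n else 0)"
    and h_pos: "\<forall>n. h n > 0"
    and c_def: "\<forall>n. c n = - (\<Sum>\<^sub>\<infinity>x\<in>(UNIV::int set).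
                    poly (p (Suc n)) (of_int x) * Al f g (poly (p n)) (of_int x) * \<rho> x)"
    and \<omega>_def: "\<forall>x. \<omega> x = poly f (of_int (x + 1)) * \<rho> (x + 1)"
    and pfaff: "\<forall>n\<ge>1. pfaffian n (\<lambda>i j. (\<Sum>\<^sub>\<infinity>x\<in>(UNIV::int set).
                    (real_of_int x ^ i * (real_of_int x + 1) ^ j
                     - (real_of_int x + 1) ^ i * real_of_int x ^ j) * \<omega> x)) \<noteq> 0"
    and Q_odd: "\<forall>n. Q (2*n+1) = p (2*n+1)"
    and Q_even: "\<forall>n. Q (2*n) = (\<Sum>l\<le>n. smult (\<Prod>j\<in>{l..<n}. c (2*j+1) / c (2*j)) (p (2*l)))"
    and u_def: "\<forall>n. u n = c (2*n)"
    and t_def: "\<forall>m\<ge>1. t m = - c (2*m - 1) / c (2*m - 2)"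
  shows "\<forall>m.
      p (2*m+1) = Q (2*m+1)
    \<and> (\<forall>y. (1 / u m) * Al f g (poly (Q (2*m+1))) y
            = poly (p (2*m)) y / h (2*m) + t (m+1) * (poly (p (2*m+2)) y / h (2*m+2)))
    \<and> p (2*m) = (if m = 0 then Q 0 else Q (2*m) + smult (t m) (Q (2*m - 2)))
    \<and> (\<forall>y. (1 / u m) * Al f g (poly (Q (2*m))) y = - (poly (p (2*m+1)) y / h (2*m+1)))"
proof -
  have orth': "\<forall>m n. Lw \<rho> (p m * p n) = (if n = m then h n else 0)"
    using orth by (simp add: Lw_def mult.assoc)
  interpret O: OPS \<rho> f g p h
    using nonneg moments deg_f deg_g pearson monic orth' h_pos by unfold_locales
  have cB: "c n = - O.B (p (Suc n)) (p n)" for n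
    using c_def by (simp add: O.B_def Lw_def Al_Ap mult.assoc)
  have Mat: "(\<Sum>\<^sub>\<infinity>x\<in>(UNIV::int set).
                    (real_of_int x ^ i * (real_of_int x + 1) ^ j
                     - (real_of_int x + 1) ^ i * real_of_int x ^ j) * \<omega> x) = O.B (monom 1 i) (monom 1 j)"
    for i j
  proof -
    define F where "F y = poly (f * (sh (-1) (monom 1 i) * monom 1 j - monom 1 i * sh (-1) (monom 1 j))) (of_int y) * \<rho> y" for y
    have "O.B (monom 1 i) (monom 1 j) = infsum F UNIV"
      unfolding O.B_formula Lw_def F_def ..
    also have "\<dots> = infsum (F \<circ> (\<lambda>x::int. x + 1)) UNIV"
      using infsum_reindex[of "\<lambda>x::int. x+1" UNIV F] range_succ_int by simp
    also have "\<dots> = (\<Sum>\<^sub>\<infinity>x\<in>(UNIV::int set).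
                    (real_of_int x ^ i * (real_of_int x + 1) ^ j
                     - (real_of_int x + 1) ^ i * real_of_int x ^ j) * \<omega> x)"
      by (rule infsum_cong) (simp add: F_def \<omega>_def poly_monom algebra_simps)
    finally show ?thesis by simp
  qed
  have cnz: "c (2*m) \<noteq> 0" for m
  proof
    assume "c (2*m) = 0"
    then have "O.B (p (2*m+1)) (p (2*m)) = 0" using cB[of "2*m"] by simp
    then have "PF O.B (Suc m) (\<lambda>k. monom 1 k) = 0" by (rule O.pf_zero)
    then have "pfaffian (Suc m) (\<lambda>i j. O.B (monom 1 i) (monom 1 j)) = 0"
      by (simp add: pfaffian_def PF_def)
    then show False using pfaff Mat by auto
  qed
  have Apc: "Ap f g (p n) = smult (- c n / h (Suc n)) (p (Suc n)) +
      (if n = 0 then 0 else smult (c (n-1) / h (n-1)) (p (n-1)))" for n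
  proof (cases n)
    case 0 then show ?thesis using O.Ap_p[of n] cB[of n] by simp
  next
    case (Suc k)
    have "O.B (p k) (p (Suc k)) = c k" using cB[of k] O.B_skew[of "p k" "p (Suc k)"] by simp
    then show ?thesis using O.Ap_p[of n] cB[of n] Suc by simp
  qed
  have Q0: "Q 0 = p 0" using Q_even[rule_format, of 0] by simp
  have Qrec: "Q (2*Suc m) = p (2*Suc m) + smult (c (2*m+1) / c (2*m)) (Q (2*m))" for m
  proof -
    define r where "r j = c (2*j+1) / c (2*j)" for j
    have "Q (2*Suc m) = (\<Sum>l\<le>Suc m. smult (\<Prod>j\<in>{l..<Suc m}. r j) (p (2*l)))"
      unfolding r_def by (rule Q_even[rule_format])
    also have "\<dots> = (\<Sum>l\<le>m. smult (\<Prod>j\<in>{l..<Suc m}. r j) (p (2*l))) + p (2*Suc m)"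
      by (subst sum.atMost_Suc) simp
    also have "(\<Sum>l\<le>m. smult (\<Prod>j\<in>{l..<Suc m}. r j) (p (2*l))) =
               (\<Sum>l\<le>m. smult (r m) (smult (\<Prod>j\<in>{l..<m}. r j) (p (2*l))))"
      by (intro sum.cong refl) (simp add: prod.atLeastLessThan_Suc mult.commute)
    also have "\<dots> = smult (r m) (Q (2*m))"
      using Q_even r_def by (simp add: smult_sum_right)
    finally show ?thesis by (simp add: r_def)
  qed
  have AQ: "Ap f g (Q (2*m)) = smult (- c (2*m) / h (2*m+1)) (p (2*m+1))" for m
  proof (induction m)
    case 0 then show ?case using Apc[of 0] Q0 by simp
  next
    case (Suc m)
    have e2: "2 * Suc m = Suc (Suc (2*m))" by simp
    have "Ap f g (Q (2*Suc m)) = Ap f g (p (2*Suc m)) + smult (c (2*m+1) / c (2*m)) (Ap f g (Q (2*m)))"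
      unfolding Qrec[of m] by (simp only: Ap_add Ap_smult)
    also have "\<dots> = smult (- c (2*Suc m) / h (2*Suc m+1)) (p (2*Suc m+1))
        + smult (c (2*m+1) / h (2*m+1)) (p (2*m+1))
        + smult (c (2*m+1) / c (2*m)) (smult (- c (2*m) / h (2*m+1)) (p (2*m+1)))"
      unfolding Suc.IH using Apc[of "2*Suc m"] by (simp add: e2)
    also have "smult (c (2*m+1) / c (2*m)) (smult (- c (2*m) / h (2*m+1)) (p (2*m+1)))
        = - smult (c (2*m+1) / h (2*m+1)) (p (2*m+1))"
      using cnz[of m] by simp
    finally show ?case by simp
  qed
  show ?thesis
  proof (intro allI conjI)
    fix m
    show "p (2*m+1) = Q (2*m+1)" using Q_odd by simp
  next
    fix m y
    have t1: "t (m+1) = - c (2*m+1) / c (2*m)" using t_def by simp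
    have "Al f g (poly (Q (2*m+1))) y = - c (2*m+1) / h (2*m+2) * poly (p (2*m+2)) y
        + c (2*m) / h (2*m) * poly (p (2*m)) y"
      using Apc[of "2*m+1"] Q_odd by (simp add: Al_Ap)
    moreover have um: "u m = c (2*m)" using u_def by simp
    ultimately show "(1 / u m) * Al f g (poly (Q (2*m+1))) y
            = poly (p (2*m)) y / h (2*m) + t (m+1) * (poly (p (2*m+2)) y / h (2*m+2))"
      unfolding t1 um using cnz[of m] by (simp add: field_simps)
  next
    fix m
    show "p (2*m) = (if m = 0 then Q 0 else Q (2*m) + smult (t m) (Q (2*m - 2)))"
    proof (cases m)
      case 0 then show ?thesis using Q0 by simp
    next
      case (Suc k)
      have tk: "t m = - (c (2*k+1) / c (2*k))" using t_def Suc by simp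
      have "2*m - 2 = 2*k" using Suc by simp
      then show ?thesis using Qrec[of k] Suc tk by simp
    qed
  next
    fix m y
    show "(1 / u m) * Al f g (poly (Q (2*m))) y = - (poly (p (2*m+1)) y / h (2*m+1))"
      using AQ[of m] cnz[of m] u_def by (simp add: Al_Ap)
  qed
qed

end
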